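(* Let $T \ge 1$ and let $Q_0, \ldots, Q_T$ be real matrices with $Q_t \in \mathbb R^{p_t \times n_x}$, such that the row space of $Q_t$ contains the row space of $Q_{t+1}$ for $t = 0, \ldots, T-1$. For vectors $\rho_{t+1|0} \in \mathbb R^{p_{t+1}}$, $t = 0, \ldots, T-1$, define $\rho_{t|1} := (Q_t')^+ Q_{t+1}' \rho_{t+1|0}$ for $t = 0,\ldots,T-1$ and $$\pi_5 := \frac14 \sum_{t=0}^{T-1} \big(|\rho_{t+1|0}|^2 - |\rho_{t|1}|^2\big).$$ Then $\pi_5 \ge 0$ for all $\rho_{1|0}, \ldots, \rho_{T|0}$ if and only if $\|Q_{t+1} Q_t^+\| \le 1$ for $t = 0, \ldots, T-1$.
   Context: For a matrix $M$, $M'$ is its transpose, $M^+$ its Moore–Penrose pseudoinverse, and $\|M\|$ its maximum singular value. $|\cdot|$ is the Euclidean norm. *)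

theory Defs
  imports "Jordan_Normal_Form.Char_Poly"
begin

definition row_space :: "real mat \<Rightarrow> real vec set" where
  "row_space A = {transpose_mat A *\<^sub>v y | y. y \<in> carrier_vec (dim_row A)}"

definition pinv :: "real mat \<Rightarrow> real mat" where
  "pinv A = (THE X. X \<in> carrier_mat (dim_col A) (dim_row A) \<and>
      A * X * A = A \<and> X * A * X = X \<and>
      transpose_mat (A * X) = A * X \<and> transpose_mat (X * A) = X * A)"

definition max_sv :: "real mat \<Rightarrow> real" where
  "max_sv M = sqrt (Max (insert 0 {l. eigenvalue (transpose_mat M * M) l}))"

definition vnorm :: "real vec \<Rightarrow> real" where
  "vnorm v = sqrt (v \<bullet> v)"

end

theory Submission
  imports Defs "HOL-Analysis.Function_Topology"
begin


lemma sp_self_ge0: "(v::real vec) \<bullet> v \<ge> 0"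
  unfolding scalar_prod_def by (auto intro: sum_nonneg)

lemma sp_self_eq0: assumes "(v::real vec) \<in> carrier_vec n"
  shows "v \<bullet> v = 0 \<longleftrightarrow> v = 0\<^sub>v n"
proof
  assume "v \<bullet> v = 0"
  hence "(\<Sum>i\<in>{0..<n}. v $ i * v $ i) = 0" using assms unfolding scalar_prod_def by auto
  hence "\<forall>i\<in>{0..<n}. v $ i * v $ i = 0"
    by (subst sum_nonneg_eq_0_iff[symmetric]) auto
  thus "v = 0\<^sub>v n" using assms by (intro eq_vecI) auto
qed (use assms in auto)

lemma sym_sp: assumes R: "(R::real mat) \<in> carrier_mat n n" and s: "R\<^sup>T = R"
  and x: "x \<in> carrier_vec n" and y: "y \<in> carrier_vec n"
  shows "(R *\<^sub>v x) \<bullet> y = x \<bullet> (R *\<^sub>v y)"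
proof -
  have "(R\<^sup>T *\<^sub>v x) \<bullet> y = x \<bullet> (R *\<^sub>v y)" by (rule transpose_vec_mult_scalar[OF R y x])
  thus ?thesis using s by simp
qed

lemma mat_eq_vecI: assumes A: "(A::real mat) \<in> carrier_mat nr nc" and B: "B \<in> carrier_mat nr nc"
  and e: "\<And>v. v \<in> carrier_vec nc \<Longrightarrow> A *\<^sub>v v = B *\<^sub>v v"
  shows "A = B"
proof (rule eq_matI)
  fix i j assume i: "i < dim_row B" and j: "j < dim_col B"
  have "(A *\<^sub>v unit_vec nc j) $ i = (B *\<^sub>v unit_vec nc j) $ i" using e by simp
  thus "A $$ (i, j) = B $$ (i, j)" using A B i j by simp
qed (use A B in auto)

lemma smult_0_vec_c[simp]: "c \<in> carrier_vec n \<Longrightarrow> (0::real) \<cdot>\<^sub>v c = 0\<^sub>v n"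
  by (intro eq_vecI) auto

lemma smult_vec_0_c[simp]: "(s::real) \<cdot>\<^sub>v 0\<^sub>v n = 0\<^sub>v n"
  by (intro eq_vecI) auto

lemma mat_vec_zero_c[simp]: "(A::real mat) \<in> carrier_mat m n \<Longrightarrow> A *\<^sub>v 0\<^sub>v n = 0\<^sub>v m"
  by (intro eq_vecI) auto

lemma rank1_upd_mult: assumes R: "R \<in> carrier_mat n n" and c: "c \<in> carrier_vec n"
  and x: "x \<in> carrier_vec n"
  shows "mat n n (\<lambda>(i,j). R $$ (i,j) + c $ i * c $ j / k) *\<^sub>v x
     = R *\<^sub>v x + ((c \<bullet> x) / k) \<cdot>\<^sub>v (c :: real vec)"
proof (rule eq_vecI)
  fix i assume "i < dim_vec (R *\<^sub>v x + ((c \<bullet> x) / k) \<cdot>\<^sub>v c)"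
  hence i: "i < n" using R c by simp
  show "(mat n n (\<lambda>(i,j). R $$ (i,j) + c $ i * c $ j / k) *\<^sub>v x) $ i
     = (R *\<^sub>v x + ((c \<bullet> x) / k) \<cdot>\<^sub>v c) $ i"
    using i R c x
    by (simp add: scalar_prod_def row_def sum.distrib sum_distrib_left sum_divide_distrib algebra_simps)
qed (use R c in auto)

lemma proj_exists:
  assumes "set vs \<subseteq> carrier_vec n"
  shows "\<exists>R\<in>carrier_mat n n. R\<^sup>T = (R::real mat) \<and>
     (\<forall>x\<in>carrier_vec n. R *\<^sub>v (R *\<^sub>v x) = R *\<^sub>v x) \<and>
     (\<forall>v\<in>set vs. R *\<^sub>v v = v) \<and>
     (\<forall>x\<in>carrier_vec n. (\<forall>v\<in>set vs. v \<bullet> x = 0) \<longrightarrow> R *\<^sub>v x = 0\<^sub>v n)"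
  using assms
proof (induction vs)
  case Nil
  have z: "\<And>x. x \<in> carrier_vec n \<Longrightarrow> 0\<^sub>m n n *\<^sub>v (x::real vec) = 0\<^sub>v n" by (auto intro!: eq_vecI simp: scalar_prod_def)
  show ?case by (intro bexI[of _ "0\<^sub>m n n"]) (auto simp: z)
next
  case (Cons a vs)
  then obtain R0 where R0: "R0 \<in> carrier_mat n n" and s0: "R0\<^sup>T = R0"
    and i0: "\<forall>x\<in>carrier_vec n. R0 *\<^sub>v (R0 *\<^sub>v x) = R0 *\<^sub>v x"
    and f0: "\<forall>v\<in>set vs. R0 *\<^sub>v v = v"
    and k0: "\<forall>x\<in>carrier_vec n. (\<forall>v\<in>set vs. v \<bullet> x = 0) \<longrightarrow> R0 *\<^sub>v x = 0\<^sub>v n"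
    by auto
  have a: "a \<in> carrier_vec n" using Cons.prems by auto
  have vsc: "\<And>v. v \<in> set vs \<Longrightarrow> v \<in> carrier_vec n" using Cons.prems by auto
  define c where "c = a - R0 *\<^sub>v a"
  have c: "c \<in> carrier_vec n" unfolding c_def using a R0 by auto
  have R0c: "R0 *\<^sub>v c = 0\<^sub>v n"
    unfolding c_def using a R0 i0 by (simp add: mult_minus_distrib_mat_vec[OF R0 a])
  have cR0: "c \<bullet> (R0 *\<^sub>v x) = 0" if x: "x \<in> carrier_vec n" for x
    using sym_sp[OF R0 s0 c x] R0c x by simp
  have cv: "c \<bullet> v = 0" if v: "v \<in> set vs" for v
  proof -
    have "c \<bullet> v = a \<bullet> v - (R0 *\<^sub>v a) \<bullet> v"
      unfolding c_def using a R0 vsc[OF v] by (simp add: minus_scalar_prod_distrib)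
    also have "(R0 *\<^sub>v a) \<bullet> v = a \<bullet> v"
      using sym_sp[OF R0 s0 a vsc[OF v]] f0 v by simp
    finally show ?thesis by simp
  qed
  have ca: "c \<bullet> a = c \<bullet> c"
  proof -
    have "c \<bullet> c = c \<bullet> (a - R0 *\<^sub>v a)" by (simp add: c_def[symmetric])
    also have "\<dots> = c \<bullet> a - c \<bullet> (R0 *\<^sub>v a)"
      using a R0 c by (intro scalar_prod_minus_distrib) auto
    finally have "c \<bullet> c = c \<bullet> a - c \<bullet> (R0 *\<^sub>v a)" .
    thus ?thesis using cR0[OF a] by simp
  qed
  show ?case
  proof (cases "c = 0\<^sub>v n")
    case True
    have Ra: "R0 *\<^sub>v a = a"
    proof -
      have z: "(a - R0 *\<^sub>v a) $ i = 0" if "i < n" for i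
        using True that unfolding c_def[symmetric] by simp
      show ?thesis
      proof (rule eq_vecI)
        fix i assume "i < dim_vec a"
        hence i: "i < n" using a by simp
        show "(R0 *\<^sub>v a) $ i = a $ i" using z[OF i] i a R0 by simp
      qed (use a R0 in simp)
    qed
    show ?thesis
    proof (intro bexI[of _ R0] conjI ballI impI)
      fix x assume x: "x \<in> carrier_vec n" and o: "\<forall>v\<in>set (a # vs). v \<bullet> x = 0"
      thus "R0 *\<^sub>v x = 0\<^sub>v n" using k0 by auto
    next
      show "R0 \<in> carrier_mat n n" by (rule R0)
    next
      show "R0\<^sup>T = R0" by (rule s0)
    next
      fix x :: "real vec" assume "x \<in> carrier_vec n"
      thus "R0 *\<^sub>v (R0 *\<^sub>v x) = R0 *\<^sub>v x" using i0 by blast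
    next
      fix v :: "real vec" assume "v \<in> set (a # vs)"
      thus "R0 *\<^sub>v v = v" using f0 Ra by auto
    qed
  next
    case False
    define k where "k = c \<bullet> c"
    have kpos: "k \<noteq> 0" unfolding k_def using sp_self_eq0[OF c] False by simp
    define R where "R = mat n n (\<lambda>(i,j). R0 $$ (i,j) + c $ i * c $ j / k)"
    have Rc: "R \<in> carrier_mat n n" unfolding R_def by simp
    have Rx: "R *\<^sub>v x = R0 *\<^sub>v x + ((c \<bullet> x) / k) \<cdot>\<^sub>v c" if x: "x \<in> carrier_vec n" for x
      unfolding R_def by (rule rank1_upd_mult[OF R0 c x])
    have sR: "R\<^sup>T = R"
    proof (rule eq_matI)
      fix i j assume "i < dim_row R" "j < dim_col R"
      hence i: "i < n" and j: "j < n" unfolding R_def by auto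
      have "R0 $$ (j, i) = R0 $$ (i, j)" using s0 i j R0
        by (metis carrier_matD index_transpose_mat(1))
      thus "R\<^sup>T $$ (i, j) = R $$ (i, j)" unfolding R_def using i j by simp
    qed (auto simp: R_def)
    show ?thesis
    proof (intro bexI[of _ R] conjI ballI impI Rc sR)
      fix x :: "real vec" assume x: "x \<in> carrier_vec n"
      define s where "s = (c \<bullet> x) / k"
      have Rx': "R *\<^sub>v x = R0 *\<^sub>v x + s \<cdot>\<^sub>v c" using Rx[OF x] s_def by simp
      have y: "R0 *\<^sub>v x + s \<cdot>\<^sub>v c \<in> carrier_vec n" using R0 x c by simp
      have e1: "R0 *\<^sub>v (R0 *\<^sub>v x + s \<cdot>\<^sub>v c) = R0 *\<^sub>v x"
      proof -
        have "R0 *\<^sub>v (R0 *\<^sub>v x + s \<cdot>\<^sub>v c) = R0 *\<^sub>v (R0 *\<^sub>v x) + R0 *\<^sub>v (s \<cdot>\<^sub>v c)"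
          using R0 x c by (intro mult_add_distrib_mat_vec) auto
        also have "R0 *\<^sub>v (s \<cdot>\<^sub>v c) = 0\<^sub>v n" proof -
          have "s \<cdot>\<^sub>v 0\<^sub>v n = (0\<^sub>v n :: real vec)" by (intro eq_vecI) auto
          thus ?thesis using mult_mat_vec[OF R0 c, of s] R0c by simp
        qed
        finally show ?thesis using i0 x R0 by simp
      qed
      have e2: "c \<bullet> (R0 *\<^sub>v x + s \<cdot>\<^sub>v c) = s * k"
      proof -
        have "c \<bullet> (R0 *\<^sub>v x + s \<cdot>\<^sub>v c) = c \<bullet> (R0 *\<^sub>v x) + c \<bullet> (s \<cdot>\<^sub>v c)"
          using R0 x c by (intro scalar_prod_add_distrib) auto
        thus ?thesis using cR0[OF x] c by (simp add: k_def)
      qed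
      have "R *\<^sub>v (R *\<^sub>v x) = R0 *\<^sub>v x + (s * k / k) \<cdot>\<^sub>v c"
        unfolding Rx' Rx[OF y] e1 e2 by simp
      also have "s * k / k = s" using kpos by simp
      finally show "R *\<^sub>v (R *\<^sub>v x) = R *\<^sub>v x" using Rx' by simp
    next
      fix v assume v: "v \<in> set (a # vs)"
      show "R *\<^sub>v v = v"
      proof (cases "v = a")
        case True
        have "R *\<^sub>v a = R0 *\<^sub>v a + c" using Rx[OF a] ca kpos by (simp add: k_def)
        also have "\<dots> = a" unfolding c_def using a R0 by auto
        finally show ?thesis using True by simp
      next
        case False
        hence v': "v \<in> set vs" using v by simp
        show ?thesis using Rx[OF vsc[OF v']] cv[OF v'] f0 v' vsc[OF v'] c by simp
      qed
    next
      fix x assume x: "x \<in> carrier_vec n" and o: "\<forall>v\<in>set (a # vs). v \<bullet> x = 0"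
      have r0: "R0 *\<^sub>v x = 0\<^sub>v n" using k0 o x by auto
      have "c \<bullet> x = a \<bullet> x - (R0 *\<^sub>v a) \<bullet> x"
        unfolding c_def using a R0 x by (simp add: minus_scalar_prod_distrib)
      also have "(R0 *\<^sub>v a) \<bullet> x = 0" using sym_sp[OF R0 s0 a x] r0 a by simp
      finally have "c \<bullet> x = 0" using o by simp
      thus "R *\<^sub>v x = 0\<^sub>v n" using Rx[OF x] r0 c by simp
    qed
  qed
qed

definition penrose :: "real mat \<Rightarrow> real mat \<Rightarrow> bool" where
  "penrose A X = (X \<in> carrier_mat (dim_col A) (dim_row A) \<and>
      A * X * A = A \<and> X * A * X = X \<and>
      transpose_mat (A * X) = A * X \<and> transpose_mat (X * A) = X * A)"

lemma row_proj_exists: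
  assumes A: "(A::real mat) \<in> carrier_mat m n"
  shows "\<exists>R\<in>carrier_mat n n. R\<^sup>T = R \<and> R * R = R \<and> A * R = A \<and> R * A\<^sup>T = A\<^sup>T \<and>
     (\<forall>x\<in>carrier_vec n. A *\<^sub>v x = 0\<^sub>v m \<longrightarrow> R *\<^sub>v x = 0\<^sub>v n)"
proof -
  have "set (rows A) \<subseteq> carrier_vec n" using A set_rows_carrier by blast
  from proj_exists[OF this] obtain R where R: "R \<in> carrier_mat n n" and s: "R\<^sup>T = R"
    and i: "\<forall>x\<in>carrier_vec n. R *\<^sub>v (R *\<^sub>v x) = R *\<^sub>v x"
    and f: "\<forall>v\<in>set (rows A). R *\<^sub>v v = v"
    and k: "\<forall>x\<in>carrier_vec n. (\<forall>v\<in>set (rows A). v \<bullet> x = 0) \<longrightarrow> R *\<^sub>v x = 0\<^sub>v n"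
    by blast
  have rowin: "row A j \<in> set (rows A)" if "j < m" for j
    using that A by (simp add: rows_def)
  have RR: "R * R = R"
    by (rule mat_eq_vecI[of _ n n]) (use R i in auto)
  have AR: "A * R = A"
  proof (rule mat_eq_vecI[of _ m n])
    fix x :: "real vec" assume x: "x \<in> carrier_vec n"
    show "A * R *\<^sub>v x = A *\<^sub>v x"
    proof (rule eq_vecI)
      fix j assume "j < dim_vec (A *\<^sub>v x)"
      hence j: "j < m" using A by simp
      have rj: "row A j \<in> carrier_vec n" using A by auto
      have "(A *\<^sub>v (R *\<^sub>v x)) $ j = row A j \<bullet> (R *\<^sub>v x)" using j A by simp
      also have "\<dots> = (R *\<^sub>v row A j) \<bullet> x" using sym_sp[OF R s rj x] by simp
      also have "\<dots> = row A j \<bullet> x" using f rowin[OF j] by simp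
      finally show "(A * R *\<^sub>v x) $ j = (A *\<^sub>v x) $ j" using j A R x by simp
    qed (use A R in simp)
  qed (use A R in auto)
  have RAt: "R * A\<^sup>T = A\<^sup>T"
  proof -
    have "(A * R)\<^sup>T = R\<^sup>T * A\<^sup>T" using A R by (simp add: transpose_mult)
    thus ?thesis using AR s by simp
  qed
  have ker: "R *\<^sub>v x = 0\<^sub>v n" if x: "x \<in> carrier_vec n" and z: "A *\<^sub>v x = 0\<^sub>v m" for x
  proof -
    have "\<forall>v\<in>set (rows A). v \<bullet> x = 0"
    proof
      fix v assume "v \<in> set (rows A)"
      then obtain j where j: "j < m" and v: "v = row A j" using A by (auto simp: rows_def)
      have "(A *\<^sub>v x) $ j = 0" using z j by simp
      thus "v \<bullet> x = 0" using j v A by simp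
    qed
    thus ?thesis using k x by blast
  qed
  show ?thesis using R s RR AR RAt ker by blast
qed

lemma pinv_exists:
  assumes A: "(A::real mat) \<in> carrier_mat m n"
  shows "\<exists>X. penrose A X"
proof -
  obtain R where R: "R \<in> carrier_mat n n" and s: "R\<^sup>T = R" and RR: "R * R = R"
    and AR: "A * R = A" and RAt: "R * A\<^sup>T = A\<^sup>T"
    and ker: "\<forall>x\<in>carrier_vec n. A *\<^sub>v x = 0\<^sub>v m \<longrightarrow> R *\<^sub>v x = 0\<^sub>v n"
    using row_proj_exists[OF A] by blast
  have At: "A\<^sup>T \<in> carrier_mat n m" using A by simp
  define S where "S = A\<^sup>T * A"
  have S: "S \<in> carrier_mat n n" unfolding S_def using A by simp
  define M where "M = S + (1\<^sub>m n - R)"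
  have IR: "1\<^sub>m n - R \<in> carrier_mat n n" using R by (intro minus_carrier_mat) auto
  have M: "M \<in> carrier_mat n n" unfolding M_def using S IR by simp
  have RS: "R * S = S" unfolding S_def using R At A RAt
    by (metis assoc_mult_mat)
  have SR: "S * R = S" unfolding S_def using R At A AR
    by (metis assoc_mult_mat)
  have RM: "R * M = S"
  proof -
    have "R * M = R * S + R * (1\<^sub>m n - R)" unfolding M_def
      using R S by (intro mult_add_distrib_mat) auto
    also have "R * (1\<^sub>m n - R) = R * 1\<^sub>m n - R * R"
      using R by (intro mult_minus_distrib_mat) auto
    also have "\<dots> = 0\<^sub>m n n" using R RR by simp
    finally show ?thesis using RS S by simp
  qed
  have MR: "M * R = S"
  proof -
    have "M * R = S * R + (1\<^sub>m n - R) * R" unfolding M_def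
      using R S by (intro add_mult_distrib_mat) auto
    also have "(1\<^sub>m n - R) * R = 1\<^sub>m n * R - R * R"
      using R by (intro minus_mult_distrib_mat) auto
    also have "\<dots> = 0\<^sub>m n n" using R RR by simp
    finally show ?thesis using SR S by simp
  qed
  have St: "S\<^sup>T = S" unfolding S_def using A by (simp add: transpose_mult)
  have Mt: "M\<^sup>T = M"
  proof -
    have "M\<^sup>T = S\<^sup>T + (1\<^sub>m n - R)\<^sup>T" unfolding M_def using S IR by (rule transpose_add)
    also have "(1\<^sub>m n - R)\<^sup>T = (1\<^sub>m n)\<^sup>T - R\<^sup>T" using R by (intro transpose_minus) auto
    finally show ?thesis using St s M_def by simp
  qed
  have Mker: "x = 0\<^sub>v n" if x: "x \<in> carrier_vec n" and z: "M *\<^sub>v x = 0\<^sub>v n" for x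
  proof -
    have "S *\<^sub>v x = R *\<^sub>v (M *\<^sub>v x)" using RM x R M by (metis assoc_mult_mat_vec)
    hence Sx: "S *\<^sub>v x = 0\<^sub>v n" using z R by simp
    have "(A *\<^sub>v x) \<bullet> (A *\<^sub>v x) = x \<bullet> (S *\<^sub>v x)"
      unfolding S_def using A x transpose_vec_mult_scalar[OF A x, of "A *\<^sub>v x"]
        comm_scalar_prod[of "A\<^sup>T *\<^sub>v (A *\<^sub>v x)" n x]
      by simp
    hence "(A *\<^sub>v x) \<bullet> (A *\<^sub>v x) = 0" using Sx x by simp
    hence Ax: "A *\<^sub>v x = 0\<^sub>v m" using sp_self_eq0[of "A *\<^sub>v x" m] A x by simp
    hence Rx: "R *\<^sub>v x = 0\<^sub>v n" using ker x by blast
    have "M *\<^sub>v x = S *\<^sub>v x + (1\<^sub>m n - R) *\<^sub>v x" unfolding M_def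
      using S R x by (intro add_mult_distrib_mat_vec) auto
    also have "(1\<^sub>m n - R) *\<^sub>v x = 1\<^sub>m n *\<^sub>v x - R *\<^sub>v x"
      using R x by (intro minus_mult_distrib_mat_vec) auto
    finally have "M *\<^sub>v x = x" using Sx Rx x by simp
    thus ?thesis using z by simp
  qed
  have "det M \<noteq> 0" using det_0_iff_vec_prod_zero[OF M] Mker by auto
  from det_non_zero_imp_unit[OF M this, of "()"]
  obtain N where N: "N \<in> carrier_mat n n" and NM: "N * M = 1\<^sub>m n" and MN: "M * N = 1\<^sub>m n"
    unfolding Units_def ring_mat_def by auto
  have Nt: "N\<^sup>T = N"
  proof -
    have "N\<^sup>T * M = 1\<^sub>m n" using MN Mt M N by (metis transpose_mult transpose_one)
    hence "N\<^sup>T = N\<^sup>T * (M * N)" using MN N by simp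
    also have "\<dots> = (N\<^sup>T * M) * N" using N M by simp
    finally show ?thesis using \<open>N\<^sup>T * M = 1\<^sub>m n\<close> N by simp
  qed
  have NR: "N * R = R * N"
  proof -
    have "N * R = N * (R * (M * N))" using MN R by simp
    also have "\<dots> = N * ((R * M) * N)" using R M N by simp
    also have "\<dots> = N * ((M * R) * N)" using RM MR by simp
    also have "\<dots> = (N * M) * (R * N)" using assoc_mult_mat[OF N M, of "R * N" n] assoc_mult_mat[OF M R N] R N M by simp
    finally show ?thesis using NM R N by simp
  qed
  have NS: "N * S = R"
  proof -
    have "N * S = N * (M * R)" using MR by simp
    also have "\<dots> = (N * M) * R" using N M R by simp
    finally show ?thesis using NM R by simp
  qed
  define X where "X = N * A\<^sup>T"
  have X: "X \<in> carrier_mat n m" unfolding X_def using N At by simp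
  have XA: "X * A = R" unfolding X_def using NS N At A S_def by (metis assoc_mult_mat)
  have p1: "A * X * A = A" using XA AR A X by (metis assoc_mult_mat)
  have p2: "X * A * X = X"
  proof -
    have "X * A * X = R * (N * A\<^sup>T)" using XA X_def by simp
    also have "\<dots> = (R * N) * A\<^sup>T" using R N At by simp
    also have "\<dots> = N * (R * A\<^sup>T)" using NR R N At by (metis assoc_mult_mat)
    finally show ?thesis using RAt X_def by simp
  qed
  have p3: "(A * X)\<^sup>T = A * X"
  proof -
    have "(A * X)\<^sup>T = (A * (N * A\<^sup>T))\<^sup>T" using X_def by simp
    also have "\<dots> = (N * A\<^sup>T)\<^sup>T * A\<^sup>T" using A N At by (metis transpose_mult mult_carrier_mat)
    also have "(N * A\<^sup>T)\<^sup>T = A * N" using A N Nt by (simp add: transpose_mult)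
    also have "A * N * A\<^sup>T = A * (N * A\<^sup>T)" using A N At by simp
    finally show ?thesis using X_def by simp
  qed
  have p4: "(X * A)\<^sup>T = X * A" using XA s by simp
  show ?thesis unfolding penrose_def using X A p1 p2 p3 p4 by auto
qed

lemma penrose_unique:
  assumes X: "penrose A X" and Y: "penrose A Y"
  shows "X = Y"
proof -
  define m n where "m = dim_row A" and "n = dim_col A"
  have A: "A \<in> carrier_mat m n" unfolding m_def n_def by auto
  have Xc: "X \<in> carrier_mat n m" and X1: "A * X * A = A" and X2: "X * A * X = X"
    and X3: "(A * X)\<^sup>T = A * X" and X4: "(X * A)\<^sup>T = X * A"
    using X unfolding penrose_def m_def n_def by auto
  have Yc: "Y \<in> carrier_mat n m" and Y1: "A * Y * A = A" and Y2: "Y * A * Y = Y"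
    and Y3: "(A * Y)\<^sup>T = A * Y" and Y4: "(Y * A)\<^sup>T = Y * A"
    using Y unfolding penrose_def m_def n_def by auto
  have AYc: "A * Y \<in> carrier_mat m m" and AXc: "A * X \<in> carrier_mat m m"
    and YAc: "Y * A \<in> carrier_mat n n" and XAc: "X * A \<in> carrier_mat n n"
    using A Xc Yc by auto
  have AX: "A * X = A * Y"
  proof -
    have "A * X = (A * Y * A) * X" using Y1 by simp
    also have "\<dots> = (A * Y) * (A * X)" by (rule assoc_mult_mat[OF AYc A Xc])
    finally have "(A * X)\<^sup>T = ((A * Y) * (A * X))\<^sup>T" by simp
    also have "\<dots> = (A * X)\<^sup>T * (A * Y)\<^sup>T" by (rule transpose_mult[OF AYc AXc])
    also have "\<dots> = (A * X) * (A * Y)" using X3 Y3 by simp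
    also have "\<dots> = (A * X * A) * Y" by (rule assoc_mult_mat[OF AXc A Yc, symmetric])
    finally show ?thesis using X1 X3 by simp
  qed
  have XA: "X * A = Y * A"
  proof -
    have "X * A = X * (A * Y * A)" using Y1 by simp
    also have "A * Y * A = A * (Y * A)" by (rule assoc_mult_mat[OF A Yc A])
    also have "X * (A * (Y * A)) = (X * A) * (Y * A)" by (rule assoc_mult_mat[OF Xc A YAc, symmetric])
    finally have "(X * A)\<^sup>T = ((X * A) * (Y * A))\<^sup>T" by simp
    also have "\<dots> = (Y * A)\<^sup>T * (X * A)\<^sup>T" by (rule transpose_mult[OF XAc YAc])
    also have "\<dots> = (Y * A) * (X * A)" using X4 Y4 by simp
    also have "\<dots> = Y * (A * (X * A))" by (rule assoc_mult_mat[OF Yc A XAc])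
    also have "A * (X * A) = A * X * A" by (rule assoc_mult_mat[OF A Xc A, symmetric])
    finally show ?thesis using X1 X4 by simp
  qed
  have "X = (X * A) * X" using X2 by simp
  also have "\<dots> = (Y * A) * X" using XA by simp
  also have "\<dots> = Y * (A * X)" by (rule assoc_mult_mat[OF Yc A Xc])
  also have "\<dots> = Y * (A * Y)" using AX by simp
  also have "\<dots> = Y * A * Y" by (rule assoc_mult_mat[OF Yc A Yc, symmetric])
  also have "\<dots> = Y" using Y2 by simp
  finally show ?thesis .
qed

lemma pinv_penrose: "penrose A (pinv A)"
proof -
  obtain X where X: "penrose A X" using pinv_exists[of A "dim_row A" "dim_col A"] by auto
  have "pinv A = (THE X. penrose A X)" unfolding pinv_def penrose_def by simp
  also have "\<dots> = X" using X penrose_unique by blast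
  finally show ?thesis using X by simp
qed

lemma pinv_carrier: "pinv A \<in> carrier_mat (dim_col A) (dim_row A)"
  using pinv_penrose[of A] unfolding penrose_def by auto

lemma pinv_transpose: "pinv (A\<^sup>T) = (pinv A)\<^sup>T"
proof -
  define m n where "m = dim_row A" and "n = dim_col A"
  have A: "A \<in> carrier_mat m n" unfolding m_def n_def by auto
  define X where "X = pinv A"
  have Xc: "X \<in> carrier_mat n m" and X1: "A * X * A = A" and X2: "X * A * X = X"
    and X3: "(A * X)\<^sup>T = A * X" and X4: "(X * A)\<^sup>T = X * A"
    using pinv_penrose[of A] unfolding penrose_def m_def n_def X_def by auto
  have At: "A\<^sup>T \<in> carrier_mat n m" and Xt: "X\<^sup>T \<in> carrier_mat m n" using A Xc by auto
  have t1: "A\<^sup>T * X\<^sup>T = X * A" using X4 transpose_mult[OF Xc A] by simp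
  have t2: "X\<^sup>T * A\<^sup>T = A * X" using X3 transpose_mult[OF A Xc] by simp
  have "penrose (A\<^sup>T) (X\<^sup>T)" unfolding penrose_def
  proof (intro conjI)
    show "X\<^sup>T \<in> carrier_mat (dim_col A\<^sup>T) (dim_row A\<^sup>T)" using Xc A by auto
    have AXc: "A * X \<in> carrier_mat m m" using A Xc by simp
    have "A\<^sup>T * X\<^sup>T * A\<^sup>T = (A * X * A)\<^sup>T" using transpose_mult[OF AXc A] transpose_mult[OF A Xc] assoc_mult_mat[OF At Xt At] by simp
    thus "A\<^sup>T * X\<^sup>T * A\<^sup>T = A\<^sup>T" using X1 by simp
    have XAc: "X * A \<in> carrier_mat n n" using A Xc by simp
    have "X\<^sup>T * A\<^sup>T * X\<^sup>T = (X * A * X)\<^sup>T" using transpose_mult[OF XAc Xc] transpose_mult[OF Xc A] assoc_mult_mat[OF Xt At Xt] by simp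
    thus "X\<^sup>T * A\<^sup>T * X\<^sup>T = X\<^sup>T" using X2 by simp
    show "(A\<^sup>T * X\<^sup>T)\<^sup>T = A\<^sup>T * X\<^sup>T" using t1 X4 by simp
    show "(X\<^sup>T * A\<^sup>T)\<^sup>T = X\<^sup>T * A\<^sup>T" using t2 X3 by simp
  qed
  with pinv_penrose[of "A\<^sup>T"] penrose_unique show ?thesis unfolding X_def by blast
qed



definition bf :: "real mat \<Rightarrow> nat \<Rightarrow> (nat \<Rightarrow> real) \<Rightarrow> (nat \<Rightarrow> real) \<Rightarrow> real" where
  "bf B n f g = (\<Sum>i<n. \<Sum>j<n. f i * B $$ (i,j) * g j)"

definition sf :: "nat \<Rightarrow> (nat \<Rightarrow> real) \<Rightarrow> (nat \<Rightarrow> real) \<Rightarrow> real" where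
  "sf n f g = (\<Sum>i<n. f i * g i)"

lemma bf_sym: assumes B: "B \<in> carrier_mat n n" and s: "B\<^sup>T = B"
  shows "bf B n f g = bf B n g f"
proof -
  have e: "B $$ (i,j) = B $$ (j,i)" if "i < n" "j < n" for i j
    using s that B by (metis carrier_matD index_transpose_mat(1))
  have "bf B n f g = (\<Sum>j<n. \<Sum>i<n. f i * B $$ (i,j) * g j)" unfolding bf_def by (rule sum.swap)
  also have "\<dots> = bf B n g f" unfolding bf_def
    by (intro sum.cong refl) (auto simp: e mult.commute mult.left_commute)
  finally show ?thesis .
qed

lemma bf_expand: assumes B: "B \<in> carrier_mat n n" and s: "B\<^sup>T = B"
  shows "bf B n (\<lambda>i. f i + t * g i) (\<lambda>i. f i + t * g i)
     = bf B n f f + 2 * t * bf B n f g + t^2 * bf B n g g"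
proof -
  have "bf B n (\<lambda>i. f i + t * g i) (\<lambda>i. f i + t * g i)
     = bf B n f f + t * bf B n f g + t * bf B n g f + t^2 * bf B n g g"
    unfolding bf_def
    by (simp add: algebra_simps sum.distrib sum_distrib_left power2_eq_square)
  thus ?thesis using bf_sym[OF B s, of g f] by simp
qed

lemma sf_expand: "sf n (\<lambda>i. f i + t * g i) (\<lambda>i. f i + t * g i)
     = sf n f f + 2 * t * sf n f g + t^2 * sf n g g"
  unfolding sf_def
  by (simp add: algebra_simps sum.distrib sum_distrib_left power2_eq_square)

lemma bf_scale: "bf B n (\<lambda>i. c * f i) (\<lambda>i. c * f i) = c^2 * bf B n f f"
  unfolding bf_def by (simp add: sum_distrib_left power2_eq_square algebra_simps)

lemma sf_scale: "sf n (\<lambda>i. c * f i) (\<lambda>i. c * f i) = c^2 * sf n f f"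
  unfolding sf_def by (simp add: sum_distrib_left power2_eq_square algebra_simps)

lemma bf_cong: "(\<And>i. i < n \<Longrightarrow> f i = f' i) \<Longrightarrow> (\<And>i. i < n \<Longrightarrow> g i = g' i) \<Longrightarrow> bf B n f g = bf B n f' g'"
  unfolding bf_def by (intro sum.cong refl) auto

lemma sf_cong: "(\<And>i. i < n \<Longrightarrow> f i = f' i) \<Longrightarrow> (\<And>i. i < n \<Longrightarrow> g i = g' i) \<Longrightarrow> sf n f g = sf n f' g'"
  unfolding sf_def by (intro sum.cong refl) auto

lemma bf_vec: assumes B: "B \<in> carrier_mat n n" and x: "x \<in> carrier_vec n" and y: "y \<in> carrier_vec n"
  shows "bf B n (\<lambda>i. x $ i) (\<lambda>i. y $ i) = x \<bullet> (B *\<^sub>v y)"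
  using B x y unfolding bf_def
  by (simp add: scalar_prod_def sum_distrib_left mult.assoc atLeast0LessThan)

lemma sf_vec: assumes x: "x \<in> carrier_vec n" and y: "y \<in> carrier_vec n"
  shows "sf n (\<lambda>i. x $ i) (\<lambda>i. y $ i) = x \<bullet> y"
  using x y unfolding sf_def by (simp add: scalar_prod_def atLeast0LessThan)

lemma sf_nonneg: "sf n f f \<ge> 0"
  unfolding sf_def by (auto intro: sum_nonneg)

lemma sf_zero: "sf n f f = 0 \<Longrightarrow> i < n \<Longrightarrow> f i = 0"
  unfolding sf_def by (subst (asm) sum_nonneg_eq_0_iff) auto

lemma cont_bf: "continuous_on UNIV (\<lambda>g::nat \<Rightarrow> real. bf B n g g)"
  unfolding bf_def
  by (intro continuous_intros continuous_on_product_coordinates)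

lemma cont_sf: "continuous_on UNIV (\<lambda>g::nat \<Rightarrow> real. sf n g g)"
  unfolding sf_def
  by (intro continuous_intros continuous_on_product_coordinates)

lemma sym_max_eig:
  assumes B: "(B::real mat) \<in> carrier_mat n n" and s: "B\<^sup>T = B" and n: "n > 0"
  shows "\<exists>l v. v \<in> carrier_vec n \<and> v \<noteq> 0\<^sub>v n \<and> B *\<^sub>v v = l \<cdot>\<^sub>v v \<and>
     (\<forall>x\<in>carrier_vec n. x \<bullet> (B *\<^sub>v x) \<le> l * (x \<bullet> x))"
proof -
  define S where "S = (\<lambda>i::nat. if i < n then {-1..1::real} else {0})"
  define K where "K = {g::nat\<Rightarrow>real. sf n g g = 1} \<inter> PiE UNIV S"
  have cP: "compact (PiE UNIV S)"
  proof -
    have "compactin (product_topology (\<lambda>i. euclidean) UNIV) (PiE UNIV S)"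
      unfolding compactin_PiE S_def by auto
    thus ?thesis unfolding euclidean_product_topology by simp
  qed
  have cl: "closed {g::nat\<Rightarrow>real. sf n g g = 1}"
    by (rule closed_Collect_eq[OF cont_sf continuous_on_const])
  have cK: "compact K" unfolding K_def using cl cP by blast
  define e where "e = (\<lambda>i::nat. if i = 0 then 1 else (0::real))"
  have ee: "\<And>i. e i * e i = (if i = 0 then 1 else 0)" by (simp add: e_def)
  have "sf n e e = 1" unfolding sf_def ee using n by (simp add: sum.delta)
  moreover have "e \<in> PiE UNIV S" unfolding e_def S_def using n by (auto simp: PiE_iff)
  ultimately have neK: "K \<noteq> {}" unfolding K_def by blast
  have ccK: "continuous_on K (\<lambda>g. bf B n g g)" using cont_bf continuous_on_subset by blast
  obtain g0 where g0K: "g0 \<in> K" and g0max: "\<forall>g\<in>K. bf B n g g \<le> bf B n g0 g0"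
    using continuous_attains_sup[OF cK neK ccK] by blast
  define l where "l = bf B n g0 g0"
  have sg0: "sf n g0 g0 = 1" using g0K unfolding K_def by simp
  have bound: "bf B n f f \<le> l * sf n f f" for f
  proof (cases "sf n f f = 0")
    case True
    hence "bf B n f f = bf B n (\<lambda>_. 0) (\<lambda>_. 0)"
      by (intro bf_cong) (auto dest: sf_zero)
    also have "\<dots> = 0" unfolding bf_def by simp
    finally show ?thesis using True by simp
  next
    case False
    define \<sigma> where "\<sigma> = sf n f f"
    have sp: "\<sigma> > 0" using False sf_nonneg[of n f] unfolding \<sigma>_def by simp
    define r where "r = sqrt \<sigma>"
    have rp: "r > 0" unfolding r_def using sp by simp
    have r2: "r^2 = \<sigma>" unfolding r_def using sp by simp
    define g where "g = (\<lambda>i. if i < n then (1/r) * f i else 0)"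
    have sfg: "sf n g g = (1/r)^2 * \<sigma>"
      unfolding \<sigma>_def sf_scale[symmetric] by (intro sf_cong) (auto simp: g_def)
    hence sfg1: "sf n g g = 1" using r2 rp sp by (simp add: power_divide)
    have "g \<in> PiE UNIV S"
    proof -
      have fr: "\<bar>f i\<bar> \<le> r" if i: "i < n" for i
      proof -
        have "f i * f i \<le> \<sigma>" unfolding \<sigma>_def sf_def
          by (rule member_le_sum[of i "{..<n}" "\<lambda>i. f i * f i"]) (use i in auto)
        hence "\<bar>f i\<bar>^2 \<le> \<sigma>" by (simp add: power2_eq_square)
        thus ?thesis unfolding r_def by (rule real_le_rsqrt)
      qed
      have le1: "\<bar>(1/r) * f i\<bar> \<le> 1" if "i < n" for i
      proof -
        have "\<bar>(1/r) * f i\<bar> = \<bar>f i\<bar> / r" using rp by (simp add: abs_mult)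
        also have "\<dots> \<le> 1" using rp fr[OF that] by (simp add: pos_divide_le_eq)
        finally show ?thesis .
      qed
      have "g i \<in> S i" for i
      proof (cases "i < n")
        case True
        have "-1 \<le> (1/r) * f i \<and> (1/r) * f i \<le> 1" using le1[OF True] by linarith
        thus ?thesis using True unfolding g_def S_def by simp
      next
        case False
        thus ?thesis unfolding g_def S_def by simp
      qed
      thus ?thesis by (simp add: PiE_iff)
    qed
    hence "g \<in> K" unfolding K_def using sfg1 by simp
    hence "bf B n g g \<le> l" using g0max l_def by simp
    moreover have "bf B n g g = (1/r)^2 * bf B n f f"
      unfolding bf_scale[symmetric] by (intro bf_cong) (auto simp: g_def)
    ultimately have "(1/r)^2 * bf B n f f \<le> l" by simp
    hence "bf B n f f \<le> l * r^2" using rp by (simp add: power_divide field_simps)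
    thus ?thesis using r2 \<sigma>_def by simp
  qed
  define yB where "yB = (\<lambda>i. \<Sum>j<n. B $$ (i,j) * g0 j)"
  define y where "y = (\<lambda>i. yB i - l * g0 i)"
  define a where "a = sf n y y"
  define c where "c = l * sf n y y - bf B n y y"
  have c0: "c \<ge> 0" unfolding c_def using bound[of y] by simp
  have a0: "a \<ge> 0" unfolding a_def by (rule sf_nonneg)
  have key: "bf B n g0 y - l * sf n g0 y = a"
  proof -
    have "bf B n g0 y = bf B n y g0" by (rule bf_sym[OF B s])
    also have "\<dots> = (\<Sum>i<n. y i * yB i)" unfolding bf_def yB_def
      by (simp add: sum_distrib_left mult.assoc)
    finally have "bf B n g0 y - l * sf n g0 y = (\<Sum>i<n. y i * yB i) - (\<Sum>i<n. y i * (l * g0 i))"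
      unfolding sf_def by (simp add: sum_distrib_left algebra_simps)
    also have "\<dots> = (\<Sum>i<n. y i * y i)"
      unfolding sum_subtractf[symmetric] by (intro sum.cong refl) (simp add: y_def algebra_simps)
    finally show ?thesis unfolding a_def sf_def .
  qed
  have ineq: "2 * t * a \<le> t^2 * c" for t
  proof -
    have "bf B n (\<lambda>i. g0 i + t * y i) (\<lambda>i. g0 i + t * y i) \<le> l * sf n (\<lambda>i. g0 i + t * y i) (\<lambda>i. g0 i + t * y i)"
      by (rule bound)
    hence "l + 2 * t * bf B n g0 y + t^2 * bf B n y y \<le> l * (1 + 2 * t * sf n g0 y + t^2 * sf n y y)"
      unfolding bf_expand[OF B s] sf_expand l_def[symmetric] sg0 .
    hence "2 * t * (bf B n g0 y - l * sf n g0 y) \<le> t^2 * (l * sf n y y - bf B n y y)"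
      by (simp add: algebra_simps)
    thus ?thesis using key c_def by simp
  qed
  have a00: "a = 0"
  proof (rule ccontr)
    assume "a \<noteq> 0"
    hence ap: "a > 0" using a0 by simp
    define t where "t = a / (c + 1)"
    have tp: "t > 0" unfolding t_def using ap c0 by simp
    have "2 * t * a \<le> t^2 * c" by (rule ineq)
    hence "2 * a \<le> t * c" using tp by (simp add: power2_eq_square mult.assoc)
    also have "t * c = a * (c / (c + 1))" unfolding t_def by simp
    also have "\<dots> \<le> a * 1" using ap c0 by (intro mult_left_mono) auto
    finally show False using ap by simp
  qed
  have y0: "y i = 0" if "i < n" for i using sf_zero[of n y i] a00 that unfolding a_def by simp
  define v where "v = vec n g0"
  have v: "v \<in> carrier_vec n" unfolding v_def by simp
  have Bv: "B *\<^sub>v v = l \<cdot>\<^sub>v v"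
  proof (rule eq_vecI)
    fix i assume "i < dim_vec (l \<cdot>\<^sub>v v)"
    hence i: "i < n" unfolding v_def by simp
    have "(B *\<^sub>v v) $ i = yB i" using i B unfolding v_def yB_def
      by (simp add: scalar_prod_def row_def atLeast0LessThan)
    also have "\<dots> = l * g0 i" using y0[OF i] unfolding y_def by simp
    finally show "(B *\<^sub>v v) $ i = (l \<cdot>\<^sub>v v) $ i" using i unfolding v_def by simp
  qed (use B v in simp)
  have "v \<bullet> v = 1"
  proof -
    have "v \<bullet> v = sf n (\<lambda>i. v $ i) (\<lambda>i. v $ i)" using sf_vec[OF v v] by simp
    also have "\<dots> = sf n g0 g0" by (intro sf_cong) (auto simp: v_def)
    finally show ?thesis using sg0 by simp
  qed
  hence vnz: "v \<noteq> 0\<^sub>v n" by auto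
  have "\<forall>x\<in>carrier_vec n. x \<bullet> (B *\<^sub>v x) \<le> l * (x \<bullet> x)"
  proof
    fix x :: "real vec" assume x: "x \<in> carrier_vec n"
    show "x \<bullet> (B *\<^sub>v x) \<le> l * (x \<bullet> x)"
      using bound[of "\<lambda>i. x $ i"] bf_vec[OF B x x] sf_vec[OF x x] by simp
  qed
  thus ?thesis using v vnz Bv by blast
qed



lemma eig_finite: assumes B: "(B::real mat) \<in> carrier_mat n n"
  shows "finite {l. eigenvalue B l}"
proof -
  have "coeff (char_poly B) n = 1" using degree_monic_char_poly[OF B] by simp
  hence "char_poly B \<noteq> 0" by auto
  hence "finite {x. poly (char_poly B) x = 0}" by (rule poly_roots_finite)
  thus ?thesis using eigenvalue_root_char_poly[OF B] by simp
qed

lemma quad_XtX: assumes X: "(X::real mat) \<in> carrier_mat m n" and x: "x \<in> carrier_vec n"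
  shows "x \<bullet> (X\<^sup>T * X *\<^sub>v x) = (X *\<^sub>v x) \<bullet> (X *\<^sub>v x)"
proof -
  have Xt: "X\<^sup>T \<in> carrier_mat n m" using X by simp
  have "X\<^sup>T * X *\<^sub>v x = X\<^sup>T *\<^sub>v (X *\<^sub>v x)" using Xt X x by simp
  moreover have "(X\<^sup>T *\<^sub>v (X *\<^sub>v x)) \<bullet> x = (X *\<^sub>v x) \<bullet> (X *\<^sub>v x)"
    using transpose_vec_mult_scalar[OF X x, of "X *\<^sub>v x"] X x by simp
  moreover have "x \<bullet> (X\<^sup>T *\<^sub>v (X *\<^sub>v x)) = (X\<^sup>T *\<^sub>v (X *\<^sub>v x)) \<bullet> x"
    using X x by (intro comm_scalar_prod[of _ n]) auto
  ultimately show ?thesis by simp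
qed

lemma max_sv_le1: assumes X: "(X::real mat) \<in> carrier_mat m n"
  shows "max_sv X \<le> 1 \<longleftrightarrow> (\<forall>x\<in>carrier_vec n. (X *\<^sub>v x) \<bullet> (X *\<^sub>v x) \<le> x \<bullet> x)"
proof -
  define B where "B = X\<^sup>T * X"
  have B: "B \<in> carrier_mat n n" unfolding B_def using X by simp
  have Bs: "B\<^sup>T = B" unfolding B_def using X by (simp add: transpose_mult[of _ n m _ n])
  define E where "E = {l. eigenvalue B l}"
  have fE: "finite (insert 0 E)" unfolding E_def using eig_finite[OF B] by simp
  have "max_sv X \<le> 1 \<longleftrightarrow> Max (insert 0 E) \<le> 1" unfolding max_sv_def E_def B_def by simp
  also have "\<dots> \<longleftrightarrow> (\<forall>e\<in>E. e \<le> 1)" using fE by (subst Max_le_iff) auto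
  also have "\<dots> \<longleftrightarrow> (\<forall>x\<in>carrier_vec n. (X *\<^sub>v x) \<bullet> (X *\<^sub>v x) \<le> x \<bullet> x)"
  proof
    assume H: "\<forall>x\<in>carrier_vec n. (X *\<^sub>v x) \<bullet> (X *\<^sub>v x) \<le> x \<bullet> x"
    show "\<forall>e\<in>E. e \<le> 1"
    proof
      fix e assume "e \<in> E"
      then obtain v where v: "v \<in> carrier_vec n" and vz: "v \<noteq> 0\<^sub>v n" and Bv: "B *\<^sub>v v = e \<cdot>\<^sub>v v"
        unfolding E_def eigenvalue_def eigenvector_def using B by auto
      have "e * (v \<bullet> v) = v \<bullet> (B *\<^sub>v v)" using Bv v by simp
      also have "\<dots> = (X *\<^sub>v v) \<bullet> (X *\<^sub>v v)" unfolding B_def by (rule quad_XtX[OF X v])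
      also have "\<dots> \<le> v \<bullet> v" using H v by blast
      finally have le: "e * (v \<bullet> v) \<le> 1 * (v \<bullet> v)" by simp
      have "v \<bullet> v > 0" using sp_self_ge0[of v] sp_self_eq0[OF v] vz by auto
      thus "e \<le> 1" using le by (simp add: mult_le_cancel_right)
    qed
  next
    assume H: "\<forall>e\<in>E. e \<le> 1"
    show "\<forall>x\<in>carrier_vec n. (X *\<^sub>v x) \<bullet> (X *\<^sub>v x) \<le> x \<bullet> x"
    proof (cases "n = 0")
      case True
      show ?thesis
      proof
        fix x :: "real vec" assume x: "x \<in> carrier_vec n"
        have "x = 0\<^sub>v n" using x True by (intro eq_vecI) auto
        thus "(X *\<^sub>v x) \<bullet> (X *\<^sub>v x) \<le> x \<bullet> x" using X by simp
      qed
    next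
      case False
      then obtain l v where v: "v \<in> carrier_vec n" and vz: "v \<noteq> 0\<^sub>v n" and Bv: "B *\<^sub>v v = l \<cdot>\<^sub>v v"
        and bd: "\<forall>x\<in>carrier_vec n. x \<bullet> (B *\<^sub>v x) \<le> l * (x \<bullet> x)"
        using sym_max_eig[OF B Bs] by blast
      have "l \<in> E" unfolding E_def eigenvalue_def eigenvector_def using v vz Bv B by auto
      hence l1: "l \<le> 1" using H by blast
      show ?thesis
      proof
        fix x :: "real vec" assume x: "x \<in> carrier_vec n"
        have "(X *\<^sub>v x) \<bullet> (X *\<^sub>v x) = x \<bullet> (B *\<^sub>v x)" unfolding B_def by (rule quad_XtX[OF X x, symmetric])
        also have "\<dots> \<le> l * (x \<bullet> x)" using bd x by blast
        also have "\<dots> \<le> 1 * (x \<bullet> x)" using l1 sp_self_ge0[of x] by (intro mult_right_mono) auto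
        finally show "(X *\<^sub>v x) \<bullet> (X *\<^sub>v x) \<le> x \<bullet> x" by simp
      qed
    qed
  qed
  finally show ?thesis .
qed

lemma transp_contr: assumes X: "(X::real mat) \<in> carrier_mat m n"
  and H: "\<forall>r\<in>carrier_vec m. (X\<^sup>T *\<^sub>v r) \<bullet> (X\<^sup>T *\<^sub>v r) \<le> r \<bullet> r"
  and x: "x \<in> carrier_vec n"
  shows "(X *\<^sub>v x) \<bullet> (X *\<^sub>v x) \<le> x \<bullet> x"
proof -
  define u where "u = X *\<^sub>v x"
  define y where "y = X\<^sup>T *\<^sub>v u"
  have u: "u \<in> carrier_vec m" unfolding u_def using X x by simp
  have y: "y \<in> carrier_vec n" unfolding y_def using X u by simp
  have uu: "u \<bullet> u = y \<bullet> x" unfolding y_def u_def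
    using transpose_vec_mult_scalar[OF X x, of "X *\<^sub>v x"] X x by simp
  have yy: "y \<bullet> y \<le> u \<bullet> u" unfolding y_def using H u by blast
  have xy: "x \<bullet> y = y \<bullet> x" using x y by (rule comm_scalar_prod)
  have "0 \<le> (y - x) \<bullet> (y - x)" by (rule sp_self_ge0)
  also have "(y - x) \<bullet> (y - x) = y \<bullet> (y - x) - x \<bullet> (y - x)"
    using x y by (intro minus_scalar_prod_distrib) auto
  also have "y \<bullet> (y - x) = y \<bullet> y - y \<bullet> x" using x y by (intro scalar_prod_minus_distrib) auto
  also have "x \<bullet> (y - x) = x \<bullet> y - x \<bullet> x" using x y by (intro scalar_prod_minus_distrib) auto
  finally have "0 \<le> y \<bullet> y - 2 * (y \<bullet> x) + x \<bullet> x" using xy by simp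
  thus ?thesis using uu yy unfolding u_def by simp
qed

lemma vnorm_sq: "(vnorm v)\<^sup>2 = v \<bullet> v"
  unfolding vnorm_def using sp_self_ge0[of v] by simp



theorem proposition2:
  fixes T nx :: nat and p :: "nat \<Rightarrow> nat" and Q :: "nat \<Rightarrow> real mat"
  assumes "T \<ge> 1"
    and "\<forall>t\<le>T. Q t \<in> carrier_mat (p t) nx"
    and "\<forall>t<T. row_space (Q (Suc t)) \<subseteq> row_space (Q t)"
  shows "(\<forall>rho :: nat \<Rightarrow> real vec.
            (\<forall>t<T. rho (Suc t) \<in> carrier_vec (p (Suc t))) \<longrightarrow>
            (1/4) * (\<Sum>t<T. (vnorm (rho (Suc t)))\<^sup>2
               - (vnorm (pinv (transpose_mat (Q t)) *\<^sub>v (transpose_mat (Q (Suc t)) *\<^sub>v rho (Suc t))))\<^sup>2) \<ge> 0)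
         \<longleftrightarrow> (\<forall>t<T. max_sv (Q (Suc t) * pinv (Q t)) \<le> 1)"
proof -
  define X where "X = (\<lambda>t. Q (Suc t) * pinv (Q t))"
  have Qc: "Q t \<in> carrier_mat (p t) nx" if "t \<le> T" for t using assms(2) that by blast
  have Xc: "X t \<in> carrier_mat (p (Suc t)) (p t)" if "t < T" for t
  proof -
    have "pinv (Q t) \<in> carrier_mat nx (p t)" using pinv_carrier[of "Q t"] Qc[of t] that by auto
    thus ?thesis unfolding X_def using Qc[of "Suc t"] that by auto
  qed
  have termeq: "pinv (transpose_mat (Q t)) *\<^sub>v (transpose_mat (Q (Suc t)) *\<^sub>v r) = (X t)\<^sup>T *\<^sub>v r"
    if t: "t < T" and r: "r \<in> carrier_vec (p (Suc t))" for t r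
  proof -
    have P: "pinv (Q t) \<in> carrier_mat nx (p t)" using pinv_carrier[of "Q t"] Qc[of t] t by auto
    have Q1: "Q (Suc t) \<in> carrier_mat (p (Suc t)) nx" using Qc[of "Suc t"] t by auto
    have "(X t)\<^sup>T = (pinv (Q t))\<^sup>T * (Q (Suc t))\<^sup>T" unfolding X_def by (rule transpose_mult[OF Q1 P])
    hence "(X t)\<^sup>T *\<^sub>v r = (pinv (Q t))\<^sup>T *\<^sub>v ((Q (Suc t))\<^sup>T *\<^sub>v r)"
      using P Q1 r by simp
    thus ?thesis using pinv_transpose[of "Q t"] by simp
  qed
  define f where "f = (\<lambda>t r. r \<bullet> r - ((X t)\<^sup>T *\<^sub>v r) \<bullet> ((X t)\<^sup>T *\<^sub>v r))"
  have LHS: "(\<forall>rho :: nat \<Rightarrow> real vec.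
            (\<forall>t<T. rho (Suc t) \<in> carrier_vec (p (Suc t))) \<longrightarrow>
            (1/4) * (\<Sum>t<T. (vnorm (rho (Suc t)))\<^sup>2
               - (vnorm (pinv (transpose_mat (Q t)) *\<^sub>v (transpose_mat (Q (Suc t)) *\<^sub>v rho (Suc t))))\<^sup>2) \<ge> 0)
        \<longleftrightarrow> (\<forall>t<T. \<forall>r\<in>carrier_vec (p (Suc t)). f t r \<ge> 0)"
  proof -
    have eq: "(\<Sum>t<T. (vnorm (rho (Suc t)))\<^sup>2
               - (vnorm (pinv (transpose_mat (Q t)) *\<^sub>v (transpose_mat (Q (Suc t)) *\<^sub>v rho (Suc t))))\<^sup>2)
          = (\<Sum>t<T. f t (rho (Suc t)))"
      if H: "\<forall>t<T. rho (Suc t) \<in> carrier_vec (p (Suc t))" for rho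
      by (intro sum.cong refl) (simp add: vnorm_sq termeq H f_def)
    show ?thesis
    proof
      assume A: "\<forall>rho :: nat \<Rightarrow> real vec.
            (\<forall>t<T. rho (Suc t) \<in> carrier_vec (p (Suc t))) \<longrightarrow>
            (1/4) * (\<Sum>t<T. (vnorm (rho (Suc t)))\<^sup>2
               - (vnorm (pinv (transpose_mat (Q t)) *\<^sub>v (transpose_mat (Q (Suc t)) *\<^sub>v rho (Suc t))))\<^sup>2) \<ge> 0"
      show "\<forall>t<T. \<forall>r\<in>carrier_vec (p (Suc t)). f t r \<ge> 0"
      proof (intro allI impI ballI)
        fix t0 :: nat and r :: "real vec" assume t0: "t0 < T" and r: "r \<in> carrier_vec (p (Suc t0))"
        define rho where "rho = (\<lambda>s. if s = Suc t0 then r else 0\<^sub>v (p s))"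
        have H: "\<forall>t<T. rho (Suc t) \<in> carrier_vec (p (Suc t))" unfolding rho_def using r by auto
        have z: "f t (rho (Suc t)) = 0" if "t \<in> {..<T} - {t0}" for t
        proof -
          have "rho (Suc t) = 0\<^sub>v (p (Suc t))" using that unfolding rho_def by auto
          moreover have "(X t)\<^sup>T *\<^sub>v 0\<^sub>v (p (Suc t)) = 0\<^sub>v (p t)"
            using Xc[of t] that by (intro mat_vec_zero_c) auto
          ultimately show ?thesis unfolding f_def by simp
        qed
        have "(\<Sum>t<T. f t (rho (Suc t))) = f t0 (rho (Suc t0)) + (\<Sum>t\<in>{..<T} - {t0}. f t (rho (Suc t)))"
          using t0 by (intro sum.remove) auto
        also have "(\<Sum>t\<in>{..<T} - {t0}. f t (rho (Suc t))) = 0" using z by (intro sum.neutral) blast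
        finally have "(\<Sum>t<T. f t (rho (Suc t))) = f t0 r" unfolding rho_def by simp
        thus "f t0 r \<ge> 0" using mp[OF spec[OF A, of rho] H] eq[OF H] by simp
      qed
    next
      assume B: "\<forall>t<T. \<forall>r\<in>carrier_vec (p (Suc t)). f t r \<ge> 0"
      show "\<forall>rho :: nat \<Rightarrow> real vec.
            (\<forall>t<T. rho (Suc t) \<in> carrier_vec (p (Suc t))) \<longrightarrow>
            (1/4) * (\<Sum>t<T. (vnorm (rho (Suc t)))\<^sup>2
               - (vnorm (pinv (transpose_mat (Q t)) *\<^sub>v (transpose_mat (Q (Suc t)) *\<^sub>v rho (Suc t))))\<^sup>2) \<ge> 0"
      proof (intro allI impI)
        fix rho :: "nat \<Rightarrow> real vec" assume H: "\<forall>t<T. rho (Suc t) \<in> carrier_vec (p (Suc t))"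
        have "(\<Sum>t<T. f t (rho (Suc t))) \<ge> 0" using B H by (intro sum_nonneg) auto
        thus "(1/4) * (\<Sum>t<T. (vnorm (rho (Suc t)))\<^sup>2
               - (vnorm (pinv (transpose_mat (Q t)) *\<^sub>v (transpose_mat (Q (Suc t)) *\<^sub>v rho (Suc t))))\<^sup>2) \<ge> 0"
          using eq[OF H] by simp
      qed
    qed
  qed
  have RHS: "(\<forall>t<T. max_sv (Q (Suc t) * pinv (Q t)) \<le> 1)
     \<longleftrightarrow> (\<forall>t<T. \<forall>x\<in>carrier_vec (p t). (X t *\<^sub>v x) \<bullet> (X t *\<^sub>v x) \<le> x \<bullet> x)"
    using max_sv_le1[OF Xc] unfolding X_def by simp
  have EQ: "(\<forall>r\<in>carrier_vec (p (Suc t)). f t r \<ge> 0)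
     \<longleftrightarrow> (\<forall>x\<in>carrier_vec (p t). (X t *\<^sub>v x) \<bullet> (X t *\<^sub>v x) \<le> x \<bullet> x)" if t: "t < T" for t
  proof
    assume "\<forall>r\<in>carrier_vec (p (Suc t)). f t r \<ge> 0"
    hence H: "\<forall>r\<in>carrier_vec (p (Suc t)). ((X t)\<^sup>T *\<^sub>v r) \<bullet> ((X t)\<^sup>T *\<^sub>v r) \<le> r \<bullet> r"
      unfolding f_def by auto
    show "\<forall>x\<in>carrier_vec (p t). (X t *\<^sub>v x) \<bullet> (X t *\<^sub>v x) \<le> x \<bullet> x"
      using transp_contr[OF Xc[OF t] H] by blast
  next
    assume H0: "\<forall>x\<in>carrier_vec (p t). (X t *\<^sub>v x) \<bullet> (X t *\<^sub>v x) \<le> x \<bullet> x"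
    have Xt: "(X t)\<^sup>T \<in> carrier_mat (p t) (p (Suc t))" using Xc[OF t] by simp
    have H: "\<forall>x\<in>carrier_vec (p t). (((X t)\<^sup>T)\<^sup>T *\<^sub>v x) \<bullet> (((X t)\<^sup>T)\<^sup>T *\<^sub>v x) \<le> x \<bullet> x"
      using H0 by simp
    show "\<forall>r\<in>carrier_vec (p (Suc t)). f t r \<ge> 0"
      using transp_contr[OF Xt H] unfolding f_def by simp
  qed
  show ?thesis unfolding LHS RHS using EQ by blast
qed

end
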